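(* Consider the linear program $\min\{c^\top x + d^\top y : Tx + Qy = h,\ x \in X,\ y \in Y\}$ and its epigraphical reformulation with feasible region $\mathcal{F} = \{(x,\theta) : x \in X,\ (h - Tx, \theta) \in \mathrm{epi}(f_Y)\}$. Let $\rho \in \mathbb{R}^n$ and $\rho_0 \ge 0$, and assume $\sigma_{\mathcal{F}}(\rho,\rho_0)$ is finite. Then the problem $$\max_{\alpha \in \mathbb{R}^p}\Big\{-\alpha^\top h + \sigma_X(\rho + T^\top \alpha) + \sigma_Y(Q^\top\alpha + \rho_0 d)\Big\}$$ has an optimal solution and its optimal value equals $\sigma_{\mathcal{F}}(\rho,\rho_0)$. Moreover, if $\hat\alpha$ is any optimal solution, then every $(x,\theta)$ with $x \in X$ that satisfies the Benders' cut $\hat\alpha^\top(h - Tx) + \rho_0 \theta \ge \sigma_{\mathrm{epi}(f_Y)}(\hat\alpha, \rho_0)$ also satisfies $\rho^\top x + \rho_0\theta \ge \sigma_{\mathcal{F}}(\rho,\rho_0)$.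
   Context: $X \subseteq \mathbb{R}^n$ and $Y \subseteq \mathbb{R}^m$ are nonempty polyhedra with rational data, $Y$ pointed; $T \in \mathbb{R}^{p\times n}$, $Q \in \mathbb{R}^{p \times m}$, $h \in \mathbb{R}^p$, $c \in \mathbb{R}^n$, $d \in \mathbb{R}^m$. For $\mathcal{X} \subseteq \mathbb{R}^t$, the support is $\sigma_{\mathcal{X}}(\alpha) := \inf_{x \in \mathcal{X}} \alpha^\top x$ (so $+\infty$ if $\mathcal{X}=\emptyset$), and for sets of pairs we write $\sigma_{\mathcal{X}}(\alpha,\gamma)$ for $\inf_{(x,y)\in\mathcal{X}}\{\alpha^\top x + \gamma^\top y\}$. For $\mathcal{Y} \subseteq \mathbb{R}^m$, $f_{\mathcal{Y}}(w) := \inf_{y \in \mathcal{Y}}\{d^\top y : Qy = w\}$ and $\mathrm{epi}(f_{\mathcal{Y}}) := \{(w,\theta) \in \mathbb{R}^p\times\mathbb{R} : \theta \ge f_{\mathcal{Y}}(w)\}$. A Benders' cut is an inequality $\alpha^\top w + \alpha_0\theta \ge \beta$ valid for $\mathrm{epi}(f_Y)$, applied with $w = h - Tx$. *)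

theory Defs
  imports "HOL-Analysis.Analysis" "HOL-Library.Extended_Real"
begin

definition rat_polyhedron :: "(real^'n) set \<Rightarrow> bool" where
  "rat_polyhedron S \<longleftrightarrow>
     (\<exists>F :: ((real^'n) \<times> real) set. finite F \<and>
        (\<forall>(a,b)\<in>F. (\<forall>i. a$i \<in> \<rat>) \<and> b \<in> \<rat>) \<and>
        S = {x. \<forall>(a,b)\<in>F. a \<bullet> x \<le> b})"

definition pointed :: "(real^'n) set \<Rightarrow> bool" where
  "pointed S \<longleftrightarrow> \<not> (\<exists>y v. v \<noteq> 0 \<and> (\<forall>t::real. y + t *\<^sub>R v \<in> S))"

text \<open>Support function (an infimum, in the extended reals; +\<infinity> on the empty set).\<close>
definition supp :: "(real^'n) set \<Rightarrow> real^'n \<Rightarrow> ereal" where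
  "supp S a = (INF x\<in>S. ereal (a \<bullet> x))"

definition supp2 :: "((real^'n) \<times> real) set \<Rightarrow> real^'n \<Rightarrow> real \<Rightarrow> ereal" where
  "supp2 S a g = (INF (x,t)\<in>S. ereal (a \<bullet> x + g * t))"

definition fval :: "(real^'m) set \<Rightarrow> real^'m \<Rightarrow> real^'m^'p \<Rightarrow> real^'p \<Rightarrow> ereal" where
  "fval Y d Q w = (INF y\<in>{y\<in>Y. Q *v y = w}. ereal (d \<bullet> y))"

definition epi :: "(real^'p \<Rightarrow> ereal) \<Rightarrow> ((real^'p) \<times> real) set" where
  "epi f = {(w,\<theta>). f w \<le> ereal \<theta>}"

definition feasF :: "(real^'n) set \<Rightarrow> (real^'m) set \<Rightarrow> real^'n^'p \<Rightarrow> real^'m^'p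
    \<Rightarrow> real^'p \<Rightarrow> real^'m \<Rightarrow> ((real^'n) \<times> real) set" where
  "feasF X Y T Q h d = {(x,\<theta>). x \<in> X \<and> (h - T *v x, \<theta>) \<in> epi (fval Y d Q)}"

definition dualobj :: "(real^'n) set \<Rightarrow> (real^'m) set \<Rightarrow> real^'n^'p \<Rightarrow> real^'m^'p
    \<Rightarrow> real^'p \<Rightarrow> real^'m \<Rightarrow> real^'n \<Rightarrow> real \<Rightarrow> real^'p \<Rightarrow> ereal" where
  "dualobj X Y T Q h d \<rho> \<rho>0 \<alpha> =
     ereal (- (\<alpha> \<bullet> h)) + supp X (\<rho> + transpose T *v \<alpha>) + supp Y (transpose Q *v \<alpha> + \<rho>0 *\<^sub>R d)"

end

theory Submission
  imports Defs
begin

lemma tdot: "inner (transpose (A::real^'a^'b) *v a) x = inner a (A *v x)"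
  by (simp add: dot_lmul_matrix)

lemma L_supp:
  fixes Y :: "(real^'m) set" and Q :: "real^'m^'p"
  assumes r0: "\<rho>0 \<ge> 0" and fv: "fval Y d Q w \<le> ereal \<theta>"
  shows "supp Y (transpose Q *v \<alpha> + \<rho>0 *\<^sub>R d) \<le> ereal (\<alpha> \<bullet> w + \<rho>0 * \<theta>)"
proof -
  let ?S = "{y\<in>Y. Q *v y = w}"
  have key: "supp Y (transpose Q *v \<alpha> + \<rho>0 *\<^sub>R d) \<le> ereal (\<alpha> \<bullet> w + \<rho>0 * (d \<bullet> y))" if "y \<in> ?S" for y
  proof -
    have "supp Y (transpose Q *v \<alpha> + \<rho>0 *\<^sub>R d) \<le> ereal ((transpose Q *v \<alpha> + \<rho>0 *\<^sub>R d) \<bullet> y)"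
      unfolding supp_def using that by (auto intro!: INF_lower)
    also have "(transpose Q *v \<alpha> + \<rho>0 *\<^sub>R d) \<bullet> y = \<alpha> \<bullet> w + \<rho>0 * (d \<bullet> y)"
      using that by (simp add: inner_add_left dot_lmul_matrix)
    finally show ?thesis .
  qed
  have ne: "?S \<noteq> {}"
  proof
    assume "?S = {}"
    then have "fval Y d Q w = (INF y\<in>({}::(real^'m) set). ereal (d \<bullet> y))" unfolding fval_def by (simp only:)
    then have "fval Y d Q w = \<infinity>" by (simp add: top_ereal_def)
    with fv show False by simp
  qed
  show ?thesis
  proof (cases "\<rho>0 = 0")
    case True
    from ne obtain y where "y \<in> ?S" by blast
    from key[OF this] True show ?thesis by simp
  next
    case False
    with r0 have pos: "\<rho>0 > 0" by simp
    show ?thesis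
    proof (rule ccontr)
      assume "\<not> ?thesis"
      then have "ereal (\<alpha> \<bullet> w + \<rho>0 * \<theta>) < supp Y (transpose Q *v \<alpha> + \<rho>0 *\<^sub>R d)" by simp
      then obtain r where r1: "\<alpha> \<bullet> w + \<rho>0 * \<theta> < r" and r2: "ereal r < supp Y (transpose Q *v \<alpha> + \<rho>0 *\<^sub>R d)"
        using ereal_dense2 by (metis ereal_less(2) less_ereal.simps(1))
      have "ereal ((r - \<alpha> \<bullet> w) / \<rho>0) \<le> fval Y d Q w"
        unfolding fval_def
      proof (rule INF_greatest)
        fix y assume y: "y \<in> ?S"
        from less_le_trans[OF r2 key[OF y]] have "r < \<alpha> \<bullet> w + \<rho>0 * (d \<bullet> y)" by simp
        with pos show "ereal ((r - \<alpha> \<bullet> w) / \<rho>0) \<le> ereal (d \<bullet> y)"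
          by (simp add: divide_le_eq mult.commute)
      qed
      then have "ereal ((r - \<alpha> \<bullet> w) / \<rho>0) \<le> ereal \<theta>" using fv by (rule order_trans)
      then have "(r - \<alpha> \<bullet> w) / \<rho>0 \<le> \<theta>" by simp
      with pos have "r - \<alpha> \<bullet> w \<le> \<rho>0 * \<theta>" by (simp add: divide_le_eq mult.commute)
      with r1 show False by simp
    qed
  qed
qed


lemma axdot: "x \<bullet> (axis i 1 v* (A::real^'a^'b)) = (A *v x) $ i"
proof -
  have "x \<bullet> (axis i 1 v* A) = (axis i 1 v* A) \<bullet> x" by (rule inner_commute)
  also have "\<dots> = axis i 1 \<bullet> (A *v x)" by (rule dot_lmul_matrix)
  also have "\<dots> = (A *v x) $ i" by (simp add: inner_commute[of "axis i 1"] inner_axis)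
  finally show ?thesis .
qed

lemma farkas_gen:
  fixes G1 :: "'w::euclidean_space set" and tg :: "'i::finite \<Rightarrow> 'w" and z :: 'w
  assumes fin: "finite G1"
  shows "(\<exists>c \<beta>. (\<forall>g\<in>G1. c g \<ge> 0) \<and> z = (\<Sum>g\<in>G1. c g *\<^sub>R g) + (\<Sum>i\<in>UNIV. \<beta> i *\<^sub>R tg i))
     \<or> (\<exists>a. inner a z < 0 \<and> (\<forall>g\<in>G1. inner a g \<ge> 0) \<and> (\<forall>i. inner a (tg i) = 0))"
proof -
  define K where "K = {u. \<exists>c \<beta>. (\<forall>g\<in>G1. c g \<ge> 0) \<and> u = (\<Sum>g\<in>G1. c g *\<^sub>R g) + (\<Sum>i\<in>UNIV. \<beta> i *\<^sub>R tg i)}"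
  define G where "G = G1 \<union> range tg \<union> range (\<lambda>i. - tg i)"
  have cK: "convex_cone K"
    unfolding convex_cone_iff
  proof (intro conjI ballI allI impI)
    show "0 \<in> K" unfolding K_def by (rule CollectI, rule exI[of _ "\<lambda>_. 0"], rule exI[of _ "\<lambda>_. 0"]) simp
  next
    fix x y assume "x \<in> K" "y \<in> K"
    then obtain c \<beta> c' \<beta>' where c: "\<forall>g\<in>G1. c g \<ge> 0" "x = (\<Sum>g\<in>G1. c g *\<^sub>R g) + (\<Sum>i\<in>UNIV. \<beta> i *\<^sub>R tg i)"
      and c': "\<forall>g\<in>G1. c' g \<ge> 0" "y = (\<Sum>g\<in>G1. c' g *\<^sub>R g) + (\<Sum>i\<in>UNIV. \<beta>' i *\<^sub>R tg i)"
      unfolding K_def by blast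
    show "x + y \<in> K" unfolding K_def
      apply (rule CollectI, rule exI[of _ "\<lambda>g. c g + c' g"], rule exI[of _ "\<lambda>i. \<beta> i + \<beta>' i"])
      using c c' by (simp add: scaleR_add_left sum.distrib algebra_simps)
  next
    fix x and k :: real assume "x \<in> K" "0 \<le> k"
    then obtain c \<beta> where c: "\<forall>g\<in>G1. c g \<ge> 0" "x = (\<Sum>g\<in>G1. c g *\<^sub>R g) + (\<Sum>i\<in>UNIV. \<beta> i *\<^sub>R tg i)"
      unfolding K_def by blast
    show "k *\<^sub>R x \<in> K" unfolding K_def
      apply (rule CollectI, rule exI[of _ "\<lambda>g. k * c g"], rule exI[of _ "\<lambda>i. k * \<beta> i"])
      using c \<open>0 \<le> k\<close> by (simp add: scaleR_add_right scaleR_sum_right)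
  qed
  have GK: "G \<subseteq> K"
  proof
    fix u assume "u \<in> G"
    then consider "u \<in> G1" | j where "u = tg j" | j where "u = - tg j" unfolding G_def by blast
    then show "u \<in> K"
    proof cases
      case 1
      have "(\<Sum>g\<in>G1. (if g = u then 1 else 0) *\<^sub>R g) = u"
        using 1 fin by (subst sum.cong[OF refl, where h="\<lambda>g. if g = u then g else 0"]) auto
      then show ?thesis unfolding K_def
        by (intro CollectI exI[of _ "\<lambda>g. if g = u then 1 else 0"] exI[of _ "\<lambda>_. 0"]) simp
    next
      case 2
      have "(\<Sum>i\<in>UNIV. (if i = j then 1 else 0) *\<^sub>R tg i) = u"
        using 2 by (subst sum.cong[OF refl, where h="\<lambda>i. if i = j then tg i else 0"]) auto
      then show ?thesis unfolding K_def
        by (intro CollectI exI[of _ "\<lambda>_. 0"] exI[of _ "\<lambda>i. if i = j then 1 else 0"]) simp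
    next
      case 3
      have "(\<Sum>i\<in>UNIV. (if i = j then -1 else 0) *\<^sub>R tg i) = u"
        using 3 by (subst sum.cong[OF refl, where h="\<lambda>i. if i = j then - tg i else 0"]) auto
      then show ?thesis unfolding K_def
        by (intro CollectI exI[of _ "\<lambda>_. 0"] exI[of _ "\<lambda>i. if i = j then -1 else 0"]) simp
    qed
  qed
  have HK: "convex_cone hull G \<subseteq> K" using hull_minimal[of G K convex_cone] GK cK by blast
  show ?thesis
  proof (cases "z \<in> K")
    case True then show ?thesis unfolding K_def by blast
  next
    case False
    let ?H = "convex_cone hull G"
    have finG: "finite G" unfolding G_def using fin by simp
    have "z \<notin> ?H" using False HK by blast
    then obtain a b where ab: "inner a z < b" "\<forall>x\<in>?H. b < inner a x"
      using separating_hyperplane_closed_point[OF convex_convex_cone_hull closed_convex_cone_hull[OF finG]] by blast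
    have b0: "b < 0" using ab(2) convex_cone_hull_contains_0 by fastforce
    have nn: "inner a g \<ge> 0" if "g \<in> G" for g
    proof (rule ccontr)
      assume neg: "\<not> inner a g \<ge> 0"
      have gH: "g \<in> ?H" using that by (rule hull_inc)
      have "(b / inner a g) *\<^sub>R g \<in> ?H"
        using conic_convex_cone_hull[of G] gH neg b0
        by (intro conicD) (auto simp: divide_nonpos_neg)
      with ab(2) have "b < inner a ((b / inner a g) *\<^sub>R g)" by blast
      with neg show False by simp
    qed
    have "inner a z < 0" using ab(1) b0 by simp
    moreover have "\<forall>g\<in>G1. inner a g \<ge> 0" using nn unfolding G_def by blast
    moreover have "\<forall>i. inner a (tg i) = 0"
    proof
      fix i
      have "inner a (tg i) \<ge> 0" using nn unfolding G_def by blast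
      moreover have "inner a (- tg i) \<ge> 0" using nn unfolding G_def by blast
      ultimately show "inner a (tg i) = 0" by simp
    qed
    ultimately show ?thesis by blast
  qed
qed


lemma dual_exists:
  fixes FX :: "((real^'n) \<times> real) set" and FY :: "((real^'m) \<times> real) set"
    and T :: "real^'n^'p" and Q :: "real^'m^'p" and h :: "real^'p"
    and \<rho> :: "real^'n" and d :: "real^'m" and \<rho>0 v :: real
  assumes finX: "finite FX" and finY: "finite FY"
    and X: "X = {x. \<forall>(a,b)\<in>FX. a \<bullet> x \<le> b}" and Y: "Y = {y. \<forall>(g,e)\<in>FY. g \<bullet> y \<le> e}"
    and low: "\<And>x y. x\<in>X \<Longrightarrow> y\<in>Y \<Longrightarrow> T *v x + Q *v y = h \<Longrightarrow> v \<le> \<rho> \<bullet> x + \<rho>0 * (d \<bullet> y)"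
    and feas: "x0 \<in> X" "y0 \<in> Y" "T *v x0 + Q *v y0 = h"
  shows "\<exists>\<alpha>. \<forall>x\<in>X. \<forall>y\<in>Y. v \<le> (\<rho> + transpose T *v \<alpha>) \<bullet> x + (transpose Q *v \<alpha> + \<rho>0 *\<^sub>R d) \<bullet> y - \<alpha> \<bullet> h"
proof -
  define G1 :: "((real^'n) \<times> (real^'m) \<times> real) set" where
    "G1 = (\<lambda>(a,b). (a, 0, -b)) ` FX \<union> (\<lambda>(g,e). (0, g, -e)) ` FY \<union> {(0,0,-1)}"
  define tg where "tg = (\<lambda>i::'p. (transpose T *v axis i 1, transpose Q *v axis i 1, - h$i))"
  define z :: "(real^'n) \<times> (real^'m) \<times> real" where "z = (-\<rho>, -(\<rho>0 *\<^sub>R d), v)"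
  have finG1: "finite G1" unfolding G1_def using finX finY by simp
  have Ptg: "inner (x, y, 1::real) (tg i) = (T *v x + Q *v y - h) $ i" for x y i
    by (simp add: tg_def axdot)
  from farkas_gen[OF finG1, of z tg] show ?thesis
  proof (elim disjE exE conjE)
    fix c \<beta> assume cnn: "\<forall>g\<in>G1. 0 \<le> c g"
      and zeq: "z = (\<Sum>g\<in>G1. c g *\<^sub>R g) + (\<Sum>i\<in>UNIV. \<beta> i *\<^sub>R tg i)"
    define \<alpha> :: "real^'p" where "\<alpha> = (\<chi> i. \<beta> i)"
    show ?thesis
    proof (intro exI ballI)
      fix x y assume x: "x \<in> X" and y: "y \<in> Y"
      let ?P = "\<lambda>u. inner (x, y, 1::real) u"
      have "?P z = (\<Sum>g\<in>G1. c g * ?P g) + (\<Sum>i\<in>UNIV. \<beta> i * ?P (tg i))"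
        unfolding zeq by (simp add: inner_add_right inner_sum_right)
      moreover have "(\<Sum>g\<in>G1. c g * ?P g) \<le> 0"
      proof (rule sum_nonpos)
        fix g assume g: "g \<in> G1"
        have "?P g \<le> 0"
          using g x y unfolding G1_def X Y by (auto simp: inner_commute)
        then show "c g * ?P g \<le> 0" using cnn g by (simp add: mult_nonneg_nonpos)
      qed
      moreover have "(\<Sum>i\<in>UNIV. \<beta> i * ?P (tg i)) = \<alpha> \<bullet> (T *v x + Q *v y - h)"
        unfolding Ptg by (simp add: \<alpha>_def inner_vec_def)
      moreover have "?P z = - (\<rho> \<bullet> x) - \<rho>0 * (d \<bullet> y) + v"
        by (simp add: z_def inner_commute)
      ultimately have "v \<le> \<rho> \<bullet> x + \<rho>0 * (d \<bullet> y) + \<alpha> \<bullet> (T *v x + Q *v y - h)" by linarith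
      then show "v \<le> (\<rho> + transpose T *v \<alpha>) \<bullet> x + (transpose Q *v \<alpha> + \<rho>0 *\<^sub>R d) \<bullet> y - \<alpha> \<bullet> h"
        by (simp add: inner_add_left inner_diff_right inner_add_right dot_lmul_matrix)
    qed
  next
    fix a assume az: "inner a z < 0" and aG: "\<forall>g\<in>G1. 0 \<le> inner a g" and at: "\<forall>i. inner a (tg i) = 0"
    obtain ax ay t where a: "a = (ax, ay, t)" by (cases a) auto
    have FXc: "t * b \<le> a' \<bullet> ax" if "(a', b) \<in> FX" for a' b
      using aG that unfolding G1_def a by (force simp: inner_commute)
    have FYc: "t * e \<le> g \<bullet> ay" if "(g, e) \<in> FY" for g e
      using aG that unfolding G1_def a by (force simp: inner_commute)
    have t0: "t \<le> 0" using aG unfolding G1_def a by force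
    have TQ: "T *v ax + Q *v ay = t *\<^sub>R h"
    proof (subst vec_eq_iff, rule allI)
      fix i
      have "inner a (tg i) = 0" using at by blast
      then show "(T *v ax + Q *v ay) $ i = (t *\<^sub>R h) $ i"
        unfolding a tg_def by (simp add: axdot algebra_simps)
    qed
    have zc: "t * v < \<rho> \<bullet> ax + \<rho>0 * (d \<bullet> ay)"
      using az unfolding a z_def by (simp add: inner_commute)
    show ?thesis
    proof (cases "t < 0")
      case True
      define x' where "x' = (1/t) *\<^sub>R ax"
      define y' where "y' = (1/t) *\<^sub>R ay"
      have "x' \<in> X" unfolding X
      proof (clarify)
        fix a' b assume "(a', b) \<in> FX"
        from FXc[OF this] True show "a' \<bullet> x' \<le> b"
          by (simp add: x'_def neg_divide_le_eq mult.commute)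
      qed
      moreover have "y' \<in> Y" unfolding Y
      proof (clarify)
        fix g e assume "(g, e) \<in> FY"
        from FYc[OF this] True show "g \<bullet> y' \<le> e"
          by (simp add: y'_def neg_divide_le_eq mult.commute)
      qed
      moreover have "T *v x' + Q *v y' = h"
        using TQ True by (simp add: x'_def y'_def matrix_vector_mult_scaleR flip: scaleR_add_right)
      ultimately have "v \<le> \<rho> \<bullet> x' + \<rho>0 * (d \<bullet> y')" by (rule low)
      also have "\<dots> = (\<rho> \<bullet> ax + \<rho>0 * (d \<bullet> ay)) / t"
        by (simp add: x'_def y'_def add_divide_distrib)
      finally have "v \<le> (\<rho> \<bullet> ax + \<rho>0 * (d \<bullet> ay)) / t" .
      with True zc show ?thesis by (simp add: neg_le_divide_eq mult.commute)
    next
      case False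
      with t0 have t: "t = 0" by simp
      define \<delta> where "\<delta> = \<rho> \<bullet> ax + \<rho>0 * (d \<bullet> ay)"
      have dpos: "\<delta> > 0" using zc t by (simp add: \<delta>_def)
      define val0 where "val0 = \<rho> \<bullet> x0 + \<rho>0 * (d \<bullet> y0)"
      have v0: "v \<le> val0" unfolding val0_def by (rule low[OF feas])
      define l where "l = (val0 - v + 1) / \<delta>"
      have l0: "l \<ge> 0" unfolding l_def using v0 dpos by simp
      define x' where "x' = x0 - l *\<^sub>R ax"
      define y' where "y' = y0 - l *\<^sub>R ay"
      have "x' \<in> X" unfolding X
      proof (clarify)
        fix a' b assume ab: "(a', b) \<in> FX"
        from FXc[OF ab] t have "0 \<le> a' \<bullet> ax" by simp
        moreover have "a' \<bullet> x0 \<le> b" using feas(1) ab unfolding X by blast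
        ultimately show "a' \<bullet> x' \<le> b" using l0
          by (simp add: x'_def inner_diff_right) (smt (verit) mult_nonneg_nonneg)
      qed
      moreover have "y' \<in> Y" unfolding Y
      proof (clarify)
        fix g e assume ge: "(g, e) \<in> FY"
        from FYc[OF ge] t have "0 \<le> g \<bullet> ay" by simp
        moreover have "g \<bullet> y0 \<le> e" using feas(2) ge unfolding Y by blast
        ultimately show "g \<bullet> y' \<le> e" using l0
          by (simp add: y'_def inner_diff_right) (smt (verit) mult_nonneg_nonneg)
      qed
      moreover have "T *v x' + Q *v y' = h"
      proof -
        have "T *v x' + Q *v y' = (T *v x0 + Q *v y0) - l *\<^sub>R (T *v ax + Q *v ay)"
          by (simp add: x'_def y'_def matrix_vector_mult_diff_distrib matrix_vector_mult_scaleR algebra_simps)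
        then show ?thesis using feas(3) TQ t by simp
      qed
      ultimately have "v \<le> \<rho> \<bullet> x' + \<rho>0 * (d \<bullet> y')" by (rule low)
      also have "\<dots> = val0 - l * \<delta>"
        by (simp add: x'_def y'_def val0_def \<delta>_def inner_diff_right algebra_simps)
      also have "\<dots> = v - 1" unfolding l_def using dpos by simp
      finally show ?thesis by simp
    qed
  qed
qed


lemma dual_le:
  assumes x: "x \<in> X"
    and sY: "supp Y (transpose Q *v \<alpha> + \<rho>0 *\<^sub>R d) \<le> ereal (\<alpha> \<bullet> (h - T *v x) + \<rho>0 * \<theta>)"
  shows "dualobj X Y T Q h d \<rho> \<rho>0 \<alpha> \<le> ereal (\<rho> \<bullet> x + \<rho>0 * \<theta>)"
proof -
  have sX: "supp X (\<rho> + transpose T *v \<alpha>) \<le> ereal ((\<rho> + transpose T *v \<alpha>) \<bullet> x)"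
    unfolding supp_def using x by (rule INF_lower)
  have "dualobj X Y T Q h d \<rho> \<rho>0 \<alpha> \<le> ereal (- (\<alpha> \<bullet> h)) + ereal ((\<rho> + transpose T *v \<alpha>) \<bullet> x)
        + ereal (\<alpha> \<bullet> (h - T *v x) + \<rho>0 * \<theta>)"
    unfolding dualobj_def by (intro add_mono sX sY order_refl)
  also have "\<dots> = ereal (\<rho> \<bullet> x + \<rho>0 * \<theta>)"
    by (simp add: inner_add_left inner_diff_right dot_lmul_matrix)
  finally show ?thesis .
qed

theorem mainTheorem3:
  fixes X :: "(real^'n) set" and Y :: "(real^'m) set"
    and T :: "real^'n^'p" and Q :: "real^'m^'p" and h :: "real^'p"
    and c :: "real^'n" and d :: "real^'m"
    and \<rho> :: "real^'n" and \<rho>0 :: real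
  assumes "rat_polyhedron X" and "X \<noteq> {}"
    and "rat_polyhedron Y" and "Y \<noteq> {}" and "pointed Y"
    and "\<rho>0 \<ge> 0"
    and "supp2 (feasF X Y T Q h d) \<rho> \<rho>0 \<noteq> \<infinity>"
    and "supp2 (feasF X Y T Q h d) \<rho> \<rho>0 \<noteq> -\<infinity>"
  shows "(\<exists>\<alpha>0. \<forall>\<alpha>. dualobj X Y T Q h d \<rho> \<rho>0 \<alpha> \<le> dualobj X Y T Q h d \<rho> \<rho>0 \<alpha>0)
    \<and> (SUP \<alpha>. dualobj X Y T Q h d \<rho> \<rho>0 \<alpha>) = supp2 (feasF X Y T Q h d) \<rho> \<rho>0
    \<and> (\<forall>\<alpha>h. (\<forall>\<alpha>. dualobj X Y T Q h d \<rho> \<rho>0 \<alpha> \<le> dualobj X Y T Q h d \<rho> \<rho>0 \<alpha>h) \<longrightarrow>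
         (\<forall>x \<theta>. x \<in> X \<and> supp2 (epi (fval Y d Q)) \<alpha>h \<rho>0 \<le> ereal (\<alpha>h \<bullet> (h - T *v x) + \<rho>0 * \<theta>)
            \<longrightarrow> supp2 (feasF X Y T Q h d) \<rho> \<rho>0 \<le> ereal (\<rho> \<bullet> x + \<rho>0 * \<theta>)))"
proof -
  note r0 = \<open>\<rho>0 \<ge> 0\<close>
  let ?F = "feasF X Y T Q h d"
  let ?D = "dualobj X Y T Q h d \<rho> \<rho>0"
  obtain FX :: "((real^'n) \<times> real) set" where finX: "finite FX" and X: "X = {x. \<forall>(a,b)\<in>FX. a \<bullet> x \<le> b}"
    using \<open>rat_polyhedron X\<close> unfolding rat_polyhedron_def by blast
  obtain FY :: "((real^'m) \<times> real) set" where finY: "finite FY" and Y: "Y = {y. \<forall>(a,b)\<in>FY. a \<bullet> y \<le> b}"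
    using \<open>rat_polyhedron Y\<close> unfolding rat_polyhedron_def by blast
  obtain v where v: "supp2 ?F \<rho> \<rho>0 = ereal v"
    using assms(7,8) by (cases "supp2 ?F \<rho> \<rho>0") auto
  have Fne: "?F \<noteq> {}"
  proof
    assume "?F = {}"
    then have "supp2 ?F \<rho> \<rho>0 = (INF p\<in>({}::((real^'n) \<times> real) set). (case p of (x,t) \<Rightarrow> ereal (\<rho> \<bullet> x + \<rho>0 * t)))"
      unfolding supp2_def by (simp only:)
    then show False using v by (simp add: top_ereal_def)
  qed
  then obtain x0 \<theta>0 where x0F: "(x0, \<theta>0) \<in> ?F" by auto
  then have x0: "x0 \<in> X" and fv0: "fval Y d Q (h - T *v x0) \<le> ereal \<theta>0"
    unfolding feasF_def epi_def by auto
  have "{y\<in>Y. Q *v y = h - T *v x0} \<noteq> {}"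
  proof
    assume e: "{y\<in>Y. Q *v y = h - T *v x0} = {}"
    have "fval Y d Q (h - T *v x0) = (INF y\<in>({}::(real^'m) set). ereal (d \<bullet> y))"
      unfolding fval_def e by (simp only:)
    with fv0 show False by (simp add: top_ereal_def)
  qed
  then obtain y0 where y0: "y0 \<in> Y" "Q *v y0 = h - T *v x0" by blast
  have low: "v \<le> \<rho> \<bullet> x + \<rho>0 * (d \<bullet> y)" if x: "x \<in> X" and y: "y \<in> Y" and e: "T *v x + Q *v y = h" for x y
  proof -
    have "fval Y d Q (h - T *v x) \<le> ereal (d \<bullet> y)"
      unfolding fval_def using y e by (intro INF_lower) (auto simp: algebra_simps)
    then have "(x, d \<bullet> y) \<in> ?F" using x unfolding feasF_def epi_def by auto
    then have "supp2 ?F \<rho> \<rho>0 \<le> ereal (\<rho> \<bullet> x + \<rho>0 * (d \<bullet> y))"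
      unfolding supp2_def by (rule INF_lower2) simp
    then show ?thesis using v by simp
  qed
  obtain \<alpha>0 where a0: "\<forall>x\<in>X. \<forall>y\<in>Y. v \<le> (\<rho> + transpose T *v \<alpha>0) \<bullet> x + (transpose Q *v \<alpha>0 + \<rho>0 *\<^sub>R d) \<bullet> y - \<alpha>0 \<bullet> h"
  proof -
    have e0: "T *v x0 + Q *v y0 = h" using y0(2) by simp
    show ?thesis using dual_exists[OF finX finY X Y low x0 y0(1) e0] that by blast
  qed
  have weak: "?D \<alpha> \<le> supp2 ?F \<rho> \<rho>0" for \<alpha>
    unfolding supp2_def
  proof (rule INF_greatest, clarify)
    fix x \<theta> assume "(x, \<theta>) \<in> ?F"
    then have x: "x \<in> X" and fv: "fval Y d Q (h - T *v x) \<le> ereal \<theta>"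
      unfolding feasF_def epi_def by auto
    show "?D \<alpha> \<le> ereal (\<rho> \<bullet> x + \<rho>0 * \<theta>)"
      by (rule dual_le[OF x L_supp[OF r0 fv]])
  qed
  have lowD: "ereal v \<le> ?D \<alpha>0"
  proof -
    let ?f = "\<lambda>x. (\<rho> + transpose T *v \<alpha>0) \<bullet> x"
    let ?g = "\<lambda>y. (transpose Q *v \<alpha>0 + \<rho>0 *\<^sub>R d) \<bullet> y"
    have "ereal (v + \<alpha>0 \<bullet> h - ?g y0) \<le> supp X (\<rho> + transpose T *v \<alpha>0)"
      unfolding supp_def using a0 y0(1) by (intro INF_greatest) (auto simp: algebra_simps)
    moreover have "supp X (\<rho> + transpose T *v \<alpha>0) \<le> ereal (?f x0)"
      unfolding supp_def using x0 by (rule INF_lower)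
    ultimately obtain A where A: "supp X (\<rho> + transpose T *v \<alpha>0) = ereal A"
      by (cases "supp X (\<rho> + transpose T *v \<alpha>0)") auto
    have "ereal (v + \<alpha>0 \<bullet> h - A) \<le> supp Y (transpose Q *v \<alpha>0 + \<rho>0 *\<^sub>R d)"
      unfolding supp_def
    proof (rule INF_greatest)
      fix y assume y: "y \<in> Y"
      have "ereal (v + \<alpha>0 \<bullet> h - ?g y) \<le> supp X (\<rho> + transpose T *v \<alpha>0)"
        unfolding supp_def using a0 y by (intro INF_greatest) (auto simp: algebra_simps)
      then show "ereal (v + \<alpha>0 \<bullet> h - A) \<le> ereal ((transpose Q *v \<alpha>0 + \<rho>0 *\<^sub>R d) \<bullet> y)"
        using A by simp
    qed
    then have "ereal (- (\<alpha>0 \<bullet> h)) + ereal A + ereal (v + \<alpha>0 \<bullet> h - A) \<le> ?D \<alpha>0"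
      unfolding dualobj_def A by (intro add_mono order_refl)
    then show ?thesis by simp
  qed
  have opt: "?D \<alpha> \<le> ?D \<alpha>0" for \<alpha>
    using weak[of \<alpha>] lowD v by simp
  have sup: "(SUP \<alpha>. ?D \<alpha>) = supp2 ?F \<rho> \<rho>0"
  proof (rule antisym)
    show "(SUP \<alpha>. ?D \<alpha>) \<le> supp2 ?F \<rho> \<rho>0" by (rule SUP_least) (rule weak)
    have "supp2 ?F \<rho> \<rho>0 \<le> ?D \<alpha>0" using lowD v by simp
    also have "\<dots> \<le> (SUP \<alpha>. ?D \<alpha>)" by (rule SUP_upper) simp
    finally show "supp2 ?F \<rho> \<rho>0 \<le> (SUP \<alpha>. ?D \<alpha>)" .
  qed
  have part3: "supp2 ?F \<rho> \<rho>0 \<le> ereal (\<rho> \<bullet> x + \<rho>0 * \<theta>)"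
    if ah: "\<forall>\<alpha>. ?D \<alpha> \<le> ?D \<alpha>h" and x: "x \<in> X"
      and cut: "supp2 (epi (fval Y d Q)) \<alpha>h \<rho>0 \<le> ereal (\<alpha>h \<bullet> (h - T *v x) + \<rho>0 * \<theta>)" for \<alpha>h x \<theta>
  proof -
    have "supp2 ?F \<rho> \<rho>0 \<le> ?D \<alpha>h" using lowD v ah by (metis order_trans)
    also have "?D \<alpha>h \<le> ereal (\<rho> \<bullet> x + \<rho>0 * \<theta>)"
    proof (rule dual_le[OF x])
      have "supp Y (transpose Q *v \<alpha>h + \<rho>0 *\<^sub>R d) \<le> supp2 (epi (fval Y d Q)) \<alpha>h \<rho>0"
        unfolding supp2_def
      proof (rule INF_greatest, clarify)
        fix w t assume "(w, t) \<in> epi (fval Y d Q)"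
        then have "fval Y d Q w \<le> ereal t" unfolding epi_def by simp
        then show "supp Y (transpose Q *v \<alpha>h + \<rho>0 *\<^sub>R d) \<le> ereal (\<alpha>h \<bullet> w + \<rho>0 * t)"
          by (rule L_supp[OF r0])
      qed
      then show "supp Y (transpose Q *v \<alpha>h + \<rho>0 *\<^sub>R d) \<le> ereal (\<alpha>h \<bullet> (h - T *v x) + \<rho>0 * \<theta>)"
        using cut by (rule order_trans)
    qed
    finally show ?thesis .
  qed
  show ?thesis using opt sup part3 by blast
qed

end
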